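(* A weakly quasi-transitive digraph $D$ is chordal if and only if $S(D)$ is chordal and $D$ does not contain any of the digraphs $F_a, F_b, F_c, F_d$ described in the context as an induced subdigraph.
   Context: Digraphs are finite, have no loops and no multiple arcs, but may contain digons; an arc lying in a digon is called symmetric, otherwise non-symmetric. $N^-(v)$ / $N^+(v)$ denote the sets of in-/out-neighbours of $v$; two vertices are adjacent if there is at least one arc between them. A vertex $v$ is di-simplicial if for every $u \in N^-(v)$ and $w \in N^+(v)$ with $u \neq w$, $uw$ is an arc. A digraph is chordal if every induced subdigraph contains a di-simplicial vertex. $S(D)$ is the spanning subdigraph of $D$ consisting of all symmetric arcs of $D$. Two neighbours $u,w$ of $v$ are synchronous neighbours of $v$ if both lie in $N^-(v)\setminus N^+(v)$, or both in $N^+(v)\setminus N^-(v)$, or both in $N^-(v)\cap N^+(v)$; otherwise they are asynchronous. A digraph is weakly quasi-transitive if for each vertex $v$, any two asynchronous neighbours of $v$ are adjacent. The digraphs $F_a,F_b,F_c$ have vertex set $\{1,2,3,4\}$ with symmetric arcs $1\leftrightarrow 3$ and $2 \leftrightarrow 4$, plus: $F_a$: non-symmetric arcs $1\to2$, $2\to3$, $4\to1$ and symmetric arc $3\leftrightarrow4$; $F_b$: non-symmetric arcs $1\to2$, $2\to3$, $3\to4$, $4\to1$; $F_c$: non-symmetric arcs $1\to2$, $2\to3$, $4\to3$, $4\to1$. $F_d$ is the directed 3-cycle $1\to2\to3\to1$ with all arcs non-symmetric. *)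

theory Defs
  imports Main
begin

text \<open>A digraph is given by a finite vertex set V and an arc relation A \<subseteq> V \<times> V
  without loops (no multiple arcs since A is a set; digons allowed).\<close>

definition digraph :: "'a set \<Rightarrow> ('a \<times> 'a) set \<Rightarrow> bool" where
  "digraph V A \<longleftrightarrow> finite V \<and> A \<subseteq> V \<times> V \<and> (\<forall>v. (v, v) \<notin> A)"

definition in_nbrs :: "('a \<times> 'a) set \<Rightarrow> 'a \<Rightarrow> 'a set" where
  "in_nbrs A v = {u. (u, v) \<in> A}"

definition out_nbrs :: "('a \<times> 'a) set \<Rightarrow> 'a \<Rightarrow> 'a set" where
  "out_nbrs A v = {w. (v, w) \<in> A}"

definition adjacent :: "('a \<times> 'a) set \<Rightarrow> 'a \<Rightarrow> 'a \<Rightarrow> bool" where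
  "adjacent A u w \<longleftrightarrow> (u, w) \<in> A \<or> (w, u) \<in> A"

definition induced_arcs :: "('a \<times> 'a) set \<Rightarrow> 'a set \<Rightarrow> ('a \<times> 'a) set" where
  "induced_arcs A X = A \<inter> (X \<times> X)"

definition di_simplicial :: "('a \<times> 'a) set \<Rightarrow> 'a \<Rightarrow> bool" where
  "di_simplicial A v \<longleftrightarrow>
     (\<forall>u \<in> in_nbrs A v. \<forall>w \<in> out_nbrs A v. u \<noteq> w \<longrightarrow> (u, w) \<in> A)"

definition chordal :: "'a set \<Rightarrow> ('a \<times> 'a) set \<Rightarrow> bool" where
  "chordal V A \<longleftrightarrow>
     (\<forall>X. X \<subseteq> V \<longrightarrow> X \<noteq> {} \<longrightarrow> (\<exists>v \<in> X. di_simplicial (induced_arcs A X) v))"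

text \<open>S(D): spanning subdigraph of symmetric arcs (same vertex set V).\<close>
definition sym_arcs :: "('a \<times> 'a) set \<Rightarrow> ('a \<times> 'a) set" where
  "sym_arcs A = {(u, v). (u, v) \<in> A \<and> (v, u) \<in> A}"

definition synchronous :: "('a \<times> 'a) set \<Rightarrow> 'a \<Rightarrow> 'a \<Rightarrow> 'a \<Rightarrow> bool" where
  "synchronous A v u w \<longleftrightarrow>
     (u \<in> in_nbrs A v - out_nbrs A v \<and> w \<in> in_nbrs A v - out_nbrs A v) \<or>
     (u \<in> out_nbrs A v - in_nbrs A v \<and> w \<in> out_nbrs A v - in_nbrs A v) \<or>
     (u \<in> in_nbrs A v \<inter> out_nbrs A v \<and> w \<in> in_nbrs A v \<inter> out_nbrs A v)"

definition weakly_quasi_transitive :: "'a set \<Rightarrow> ('a \<times> 'a) set \<Rightarrow> bool" where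
  "weakly_quasi_transitive V A \<longleftrightarrow>
     (\<forall>v \<in> V. \<forall>u \<in> in_nbrs A v \<union> out_nbrs A v. \<forall>w \<in> in_nbrs A v \<union> out_nbrs A v.
        \<not> synchronous A v u w \<longrightarrow> adjacent A u w)"

definition contains_induced ::
  "'a set \<Rightarrow> ('a \<times> 'a) set \<Rightarrow> nat set \<Rightarrow> (nat \<times> nat) set \<Rightarrow> bool" where
  "contains_induced V A W F \<longleftrightarrow>
     (\<exists>f. inj_on f W \<and> f ` W \<subseteq> V \<and>
        (\<forall>i \<in> W. \<forall>j \<in> W. (f i, f j) \<in> A \<longleftrightarrow> (i, j) \<in> F))"

definition F_a :: "(nat \<times> nat) set" where
  "F_a = {(1,3),(3,1),(2,4),(4,2),(1,2),(2,3),(4,1),(3,4),(4,3)}"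

definition F_b :: "(nat \<times> nat) set" where
  "F_b = {(1,3),(3,1),(2,4),(4,2),(1,2),(2,3),(3,4),(4,1)}"

definition F_c :: "(nat \<times> nat) set" where
  "F_c = {(1,3),(3,1),(2,4),(4,2),(1,2),(2,3),(4,3),(4,1)}"

definition F_d :: "(nat \<times> nat) set" where
  "F_d = {(1,2),(2,3),(3,1)}"

end

theory Submission
  imports Defs
begin


definition ns :: "('a \<times> 'a) set \<Rightarrow> 'a \<Rightarrow> 'a \<Rightarrow> bool" where
  "ns A x y \<longleftrightarrow> (x, y) \<in> A \<and> (y, x) \<notin> A"

definition sy :: "('a \<times> 'a) set \<Rightarrow> 'a \<Rightarrow> 'a \<Rightarrow> bool" where
  "sy A x y \<longleftrightarrow> (x, y) \<in> A \<and> (y, x) \<in> A"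

lemma F4_gen:
  fixes f :: "nat \<Rightarrow> 'a"
  assumes dist: "p1 \<noteq> p2" "p1 \<noteq> p3" "p1 \<noteq> p4" "p2 \<noteq> p3" "p2 \<noteq> p4" "p3 \<noteq> p4"
    and inV: "p1 \<in> V" "p2 \<in> V" "p3 \<in> V" "p4 \<in> V"
    and nl: "\<And>v. (v, v) \<notin> A"
    and s13: "sy A p1 p3" and s24: "sy A p2 p4" and n12: "ns A p1 p2" and n23: "ns A p2 p3"
    and n41: "ns A p4 p1"
    and F: "F = {(1,3),(3,1),(2,4),(4,2),(1,2),(2,3),(4,1)} \<union> R"
    and R: "R \<subseteq> {(3,4),(4,3)}"
    and r34: "(p3, p4) \<in> A \<longleftrightarrow> (3::nat, 4::nat) \<in> R"
    and r43: "(p4, p3) \<in> A \<longleftrightarrow> (4::nat, 3::nat) \<in> R"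
  shows "contains_induced V A {1,2,3,4} F"
proof -
  define f where "f = (\<lambda>i::nat. if i = 1 then p1 else if i = 2 then p2 else if i = 3 then p3 else p4)"
  have inj: "inj_on f {1,2,3,4}" unfolding inj_on_def f_def using dist by auto
  have img: "f ` {1,2,3,4} \<subseteq> V" unfolding f_def using inV by auto
  have R': "(1::nat,1::nat) \<notin> R" "(1::nat,2::nat) \<notin> R" "(1::nat,3::nat) \<notin> R" "(1::nat,4::nat) \<notin> R"
     "(2::nat,1::nat) \<notin> R" "(2::nat,2::nat) \<notin> R" "(2::nat,3::nat) \<notin> R" "(2::nat,4::nat) \<notin> R"
     "(3::nat,1::nat) \<notin> R" "(3::nat,2::nat) \<notin> R" "(3::nat,3::nat) \<notin> R"
     "(4::nat,1::nat) \<notin> R" "(4::nat,2::nat) \<notin> R" "(4::nat,4::nat) \<notin> R"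
    using R by auto
  have "\<forall>i\<in>{1,2,3,4}. \<forall>j\<in>{1,2,3,4}. (f i, f j) \<in> A \<longleftrightarrow> (i, j) \<in> F"
    using s13 s24 n12 n23 n41 nl r34 r43 R' unfolding F f_def sy_def ns_def by auto
  then show ?thesis unfolding contains_induced_def using inj img by blast
qed

lemma F3_gen:
  assumes dist: "p1 \<noteq> p2" "p1 \<noteq> p3" "p2 \<noteq> p3"
    and inV: "p1 \<in> V" "p2 \<in> V" "p3 \<in> V"
    and nl: "\<And>v. (v, v) \<notin> A"
    and n12: "ns A p1 p2" and n23: "ns A p2 p3" and n31: "ns A p3 p1"
  shows "contains_induced V A {1,2,3} F_d"
proof -
  define f where "f = (\<lambda>i::nat. if i = 1 then p1 else if i = 2 then p2 else p3)"
  have inj: "inj_on f {1,2,3}" unfolding inj_on_def f_def using dist by auto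
  have img: "f ` {1,2,3} \<subseteq> V" unfolding f_def using inV by auto
  have "\<forall>i\<in>{1,2,3}. \<forall>j\<in>{1,2,3}. (f i, f j) \<in> A \<longleftrightarrow> (i, j) \<in> F_d"
    using n12 n23 n31 nl unfolding F_d_def f_def ns_def by auto
  then show ?thesis unfolding contains_induced_def using inj img by blast
qed

locale wctx =
  fixes V :: "'a set" and A :: "('a \<times> 'a) set"
  assumes dg: "digraph V A" and wq: "weakly_quasi_transitive V A"
    and nFa: "\<not> contains_induced V A {1,2,3,4} F_a"
    and nFb: "\<not> contains_induced V A {1,2,3,4} F_b"
    and nFc: "\<not> contains_induced V A {1,2,3,4} F_c"
    and nFd: "\<not> contains_induced V A {1,2,3} F_d"
begin

lemma nl: "(v, v) \<notin> A" using dg unfolding digraph_def by auto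
lemma inV1: "(u, v) \<in> A \<Longrightarrow> u \<in> V" using dg unfolding digraph_def by auto
lemma inV2: "(u, v) \<in> A \<Longrightarrow> v \<in> V" using dg unfolding digraph_def by auto
lemma finV: "finite V" using dg unfolding digraph_def by auto

lemma asyn:
  assumes "v \<in> V" "u \<in> in_nbrs A v \<union> out_nbrs A v" "w \<in> in_nbrs A v \<union> out_nbrs A v"
    "\<not> synchronous A v u w"
  shows "(u, w) \<in> A \<or> (w, u) \<in> A"
  using wq assms unfolding weakly_quasi_transitive_def adjacent_def by blast

lemma IO_adj: "ns A u v \<Longrightarrow> ns A v w \<Longrightarrow> (u, w) \<in> A \<or> (w, u) \<in> A"
  apply (rule asyn[of v])
  by (auto simp: ns_def in_nbrs_def out_nbrs_def synchronous_def intro: inV2)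

lemma IS_adj: "ns A u v \<Longrightarrow> sy A v s \<Longrightarrow> (u, s) \<in> A \<or> (s, u) \<in> A"
  apply (rule asyn[of v])
  by (auto simp: ns_def sy_def in_nbrs_def out_nbrs_def synchronous_def intro: inV2)

lemma OS_adj: "ns A v w \<Longrightarrow> sy A v s \<Longrightarrow> (w, s) \<in> A \<or> (s, w) \<in> A"
  apply (rule asyn[of v])
  by (auto simp: ns_def sy_def in_nbrs_def out_nbrs_def synchronous_def intro: inV1)

lemma noF4:
  assumes dist: "p1 \<noteq> p2" "p1 \<noteq> p3" "p1 \<noteq> p4" "p2 \<noteq> p3" "p2 \<noteq> p4" "p3 \<noteq> p4"
    and s13: "sy A p1 p3" and s24: "sy A p2 p4" and n12: "ns A p1 p2" and n23: "ns A p2 p3"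
    and n41: "ns A p4 p1" and adj: "(p3, p4) \<in> A \<or> (p4, p3) \<in> A"
  shows False
proof -
  have inV: "p1 \<in> V" "p2 \<in> V" "p3 \<in> V" "p4 \<in> V"
    using s13 s24 unfolding sy_def by (auto intro: inV1)
  consider "(p3, p4) \<in> A" "(p4, p3) \<in> A" | "(p3, p4) \<in> A" "(p4, p3) \<notin> A"
    | "(p3, p4) \<notin> A" "(p4, p3) \<in> A" using adj by blast
  then show False
  proof cases
    case 1
    have "contains_induced V A {1,2,3,4} F_a"
      by (rule F4_gen[OF dist inV nl s13 s24 n12 n23 n41, where R="{(3,4),(4,3)}"])
         (use 1 in \<open>auto simp: F_a_def\<close>)
    with nFa show False by blast
  next
    case 2
    have "contains_induced V A {1,2,3,4} F_b"
      by (rule F4_gen[OF dist inV nl s13 s24 n12 n23 n41, where R="{(3,4)}"])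
         (use 2 in \<open>auto simp: F_b_def\<close>)
    with nFb show False by blast
  next
    case 3
    have "contains_induced V A {1,2,3,4} F_c"
      by (rule F4_gen[OF dist inV nl s13 s24 n12 n23 n41, where R="{(4,3)}"])
         (use 3 in \<open>auto simp: F_c_def\<close>)
    with nFc show False by blast
  qed
qed

lemma W1: assumes "ns A u v" "ns A v w" shows "(u, w) \<in> A"
proof (rule ccontr)
  assume nuw: "(u, w) \<notin> A"
  have "(w, u) \<in> A" using IO_adj[OF assms] nuw by blast
  hence nwu: "ns A w u" using nuw unfolding ns_def by auto
  have d: "u \<noteq> v" "u \<noteq> w" "v \<noteq> w" using assms nl nuw unfolding ns_def by auto
  have inV: "u \<in> V" "v \<in> V" "w \<in> V" using assms unfolding ns_def by (auto intro: inV1 inV2)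
  have "contains_induced V A {1,2,3} F_d" by (rule F3_gen[OF d inV nl assms nwu])
  with nFd show False by blast
qed

lemma LP:
  assumes xa: "ns A x a" and ay: "ns A a y" and xy: "sy A x y" and ad: "sy A a d"
  shows "(x, d) \<in> A \<and> (d, y) \<in> A"
proof -
  have adjx: "(x, d) \<in> A \<or> (d, x) \<in> A" using IS_adj[OF xa ad] .
  have adjy: "(y, d) \<in> A \<or> (d, y) \<in> A" using OS_adj[OF ay ad] .
  have d: "x \<noteq> a" "a \<noteq> y" "x \<noteq> y" "d \<noteq> a" "d \<noteq> x" "d \<noteq> y"
    using xa ay xy ad nl unfolding ns_def sy_def by auto
  have 1: "(x, d) \<in> A"
  proof (rule ccontr)
    assume "(x, d) \<notin> A"
    hence "ns A d x" using adjx unfolding ns_def by auto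
    show False
      by (rule noF4[of x a y d]) (use d xy ad xa ay \<open>ns A d x\<close> adjy in \<open>auto simp: sy_def\<close>)
  qed
  have 2: "(d, y) \<in> A"
  proof (rule ccontr)
    assume "(d, y) \<notin> A"
    hence "ns A y d" using adjy unfolding ns_def by auto
    show False
      by (rule noF4[of a y d x]) (use d xy ad xa ay \<open>ns A y d\<close> adjx in \<open>auto simp: sy_def\<close>)
  qed
  show ?thesis using 1 2 by blast
qed

end
context wctx begin

definition gs :: "'a \<Rightarrow> bool" where
  "gs v \<longleftrightarrow> (\<forall>u w. sy A u v \<longrightarrow> sy A v w \<longrightarrow> u \<noteq> w \<longrightarrow> sy A u w)"
definition blS :: "'a \<Rightarrow> bool" where
  "blS b \<longleftrightarrow> (\<exists>a c. sy A b c \<and> ns A b a \<and> ns A a c)"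
definition blT :: "'a \<Rightarrow> bool" where
  "blT b \<longleftrightarrow> (\<exists>a c. sy A c b \<and> ns A c a \<and> ns A a b)"

lemma ds_crit:
  assumes g: "gs v" and s: "\<not> blS v" and t: "\<not> blT v"
  shows "di_simplicial A v"
  unfolding di_simplicial_def
proof (intro ballI impI)
  fix u w assume u: "u \<in> in_nbrs A v" and w: "w \<in> out_nbrs A v" and uw: "u \<noteq> w"
  have uv: "(u, v) \<in> A" and vw: "(v, w) \<in> A" using u w unfolding in_nbrs_def out_nbrs_def by auto
  show "(u, w) \<in> A"
  proof (cases "(v, u) \<in> A")
    case vu: True
    show ?thesis
    proof (cases "(w, v) \<in> A")
      case True
      then show ?thesis using g vu uv vw uw unfolding gs_def sy_def by blast
    next
      case False
      hence nvw: "ns A v w" using vw unfolding ns_def by auto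
      have svu: "sy A v u" using vu uv unfolding sy_def by auto
      show ?thesis
      proof (rule ccontr)
        assume "(u, w) \<notin> A"
        hence "(w, u) \<in> A" using OS_adj[OF nvw svu] by blast
        hence "ns A w u" using \<open>(u, w) \<notin> A\<close> unfolding ns_def by auto
        hence "blS v" unfolding blS_def using svu nvw by blast
        with s show False by blast
      qed
    qed
  next
    case False
    hence nuv: "ns A u v" using uv unfolding ns_def by auto
    show ?thesis
    proof (cases "(w, v) \<in> A")
      case True
      have svw: "sy A v w" using True vw unfolding sy_def by auto
      show ?thesis
      proof (rule ccontr)
        assume "(u, w) \<notin> A"
        hence "(w, u) \<in> A" using IS_adj[OF nuv svw] by blast
        hence "ns A w u" using \<open>(u, w) \<notin> A\<close> unfolding ns_def by auto
        hence "blT v" unfolding blT_def using svw nuv unfolding sy_def by blast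
        with t show False by blast
      qed
    next
      case False
      hence nvw: "ns A v w" using vw unfolding ns_def by auto
      show ?thesis using W1[OF nuv nvw] .
    qed
  qed
qed

lemma finA_out: "finite (out_nbrs A x)"
proof -
  have "out_nbrs A x \<subseteq> V" unfolding out_nbrs_def by (auto intro: inV2)
  thus ?thesis using finV finite_subset by blast
qed

lemma finA_in: "finite (in_nbrs A x)"
proof -
  have "in_nbrs A x \<subseteq> V" unfolding in_nbrs_def by (auto intro: inV1)
  thus ?thesis using finV finite_subset by blast
qed

lemma OUT:
  assumes xa: "ns A x a" and ay: "ns A a y" and xy: "sy A x y"
  shows "card (out_nbrs A a) < card (out_nbrs A x)"
proof -
  have sub: "out_nbrs A a \<subseteq> out_nbrs A x"
  proof
    fix w assume "w \<in> out_nbrs A a"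
    hence aw: "(a, w) \<in> A" unfolding out_nbrs_def by auto
    show "w \<in> out_nbrs A x"
    proof (cases "(w, a) \<in> A")
      case True
      hence "sy A a w" using aw unfolding sy_def by auto
      thus ?thesis using LP[OF xa ay xy] unfolding out_nbrs_def by auto
    next
      case False
      hence "ns A a w" using aw unfolding ns_def by auto
      thus ?thesis using W1[OF xa] unfolding out_nbrs_def by auto
    qed
  qed
  have "a \<in> out_nbrs A x" "a \<notin> out_nbrs A a" using xa nl unfolding ns_def out_nbrs_def by auto
  hence "out_nbrs A a \<subset> out_nbrs A x" using sub by blast
  thus ?thesis using finA_out psubset_card_mono by blast
qed

lemma IN:
  assumes xa: "ns A x a" and ay: "ns A a y" and xy: "sy A x y"
  shows "card (in_nbrs A a) < card (in_nbrs A y)"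
proof -
  have sub: "in_nbrs A a \<subseteq> in_nbrs A y"
  proof
    fix u assume "u \<in> in_nbrs A a"
    hence ua: "(u, a) \<in> A" unfolding in_nbrs_def by auto
    show "u \<in> in_nbrs A y"
    proof (cases "(a, u) \<in> A")
      case True
      hence "sy A a u" using ua unfolding sy_def by auto
      thus ?thesis using LP[OF xa ay xy] unfolding in_nbrs_def by auto
    next
      case False
      hence "ns A u a" using ua unfolding ns_def by auto
      thus ?thesis using W1[OF _ ay] unfolding in_nbrs_def by auto
    qed
  qed
  have "a \<in> in_nbrs A y" "a \<notin> in_nbrs A a" using ay nl unfolding ns_def in_nbrs_def by auto
  hence "in_nbrs A a \<subset> in_nbrs A y" using sub by blast
  thus ?thesis using finA_in psubset_card_mono by blast
qed

end
definition smpl :: "('a \<times> 'a) set \<Rightarrow> 'a set \<Rightarrow> 'a \<Rightarrow> bool" where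
  "smpl E X v \<longleftrightarrow> (\<forall>u\<in>X. \<forall>w\<in>X. (u, v) \<in> E \<longrightarrow> (v, w) \<in> E \<longrightarrow> u \<noteq> w \<longrightarrow> (u, w) \<in> E)"

lemma dirac:
  assumes symE: "\<And>u v. (u, v) \<in> E \<Longrightarrow> (v, u) \<in> E"
    and fin: "finite X"
    and ch: "\<And>Y. Y \<subseteq> X \<Longrightarrow> Y \<noteq> {} \<Longrightarrow> \<exists>v\<in>Y. smpl E Y v"
    and nc: "u \<in> X" "w \<in> X" "u \<noteq> w" "(u, w) \<notin> E"
  shows "\<exists>s1\<in>X. \<exists>s2\<in>X. s1 \<noteq> s2 \<and> (s1, s2) \<notin> E \<and> smpl E X s1 \<and> smpl E X s2"
  using fin ch nc
proof (induction X arbitrary: u w rule: finite_psubset_induct)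
  case (psubset X)
  obtain s where s: "s \<in> X" "smpl E X s" using psubset.prems(1)[of X] psubset.prems(2) by auto
  define X' where "X' = X - {s}"
  show ?case
  proof (cases "\<exists>u'\<in>X'. \<exists>w'\<in>X'. u' \<noteq> w' \<and> (u', w') \<notin> E")
    case True
    then obtain u' w' where uw': "u' \<in> X'" "w' \<in> X'" "u' \<noteq> w'" "(u', w') \<notin> E" by blast
    have sub: "X' \<subset> X" using s unfolding X'_def by auto
    have ch': "\<And>Y. Y \<subseteq> X' \<Longrightarrow> Y \<noteq> {} \<Longrightarrow> \<exists>v\<in>Y. smpl E Y v"
      using psubset.prems(1) sub by auto
    obtain t1 t2 where t: "t1 \<in> X'" "t2 \<in> X'" "t1 \<noteq> t2" "(t1, t2) \<notin> E"
      "smpl E X' t1" "smpl E X' t2"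
      using psubset.IH[OF sub ch' uw'] by blast
    have "(s, t1) \<notin> E \<or> (s, t2) \<notin> E"
    proof (rule ccontr)
      assume "\<not> ?thesis"
      hence "(t1, s) \<in> E" "(s, t2) \<in> E" using symE by auto
      moreover have "t1 \<in> X" "t2 \<in> X" using t(1,2) unfolding X'_def by auto
      ultimately have "(t1, t2) \<in> E" using s(2) t(3) unfolding smpl_def by blast
      with t(4) show False by blast
    qed
    then obtain t where tt: "t \<in> X'" "(s, t) \<notin> E" "smpl E X' t" using t by blast
    have "smpl E X t"
      unfolding smpl_def
    proof (intro ballI impI)
      fix a b assume ab: "a \<in> X" "b \<in> X" "(a, t) \<in> E" "(t, b) \<in> E" "a \<noteq> b"
      have "a \<noteq> s" using ab(3) tt(2) by auto
      moreover have "b \<noteq> s" using ab(4) tt(2) symE by auto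
      ultimately show "(a, b) \<in> E" using tt(3) ab unfolding smpl_def X'_def by auto
    qed
    moreover have "s \<noteq> t" "t \<in> X" using tt unfolding X'_def by auto
    ultimately show ?thesis using s tt(2) by blast
  next
    case False
    hence cl: "\<And>u' w'. u' \<in> X' \<Longrightarrow> w' \<in> X' \<Longrightarrow> u' \<noteq> w' \<Longrightarrow> (u', w') \<in> E" by blast
    obtain q where q: "q \<in> X'" "(s, q) \<notin> E"
    proof -
      have "u = s \<or> w = s" using psubset.prems(2-5) cl unfolding X'_def by blast
      thus ?thesis using that psubset.prems(2-5) symE unfolding X'_def by blast
    qed
    have "smpl E X q"
      unfolding smpl_def
    proof (intro ballI impI)
      fix a b assume ab: "a \<in> X" "b \<in> X" "(a, q) \<in> E" "(q, b) \<in> E" "a \<noteq> b"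
      have "a \<noteq> s" using ab(3) q(2) by auto
      moreover have "b \<noteq> s" using ab(4) q(2) symE by auto
      ultimately show "(a, b) \<in> E" using cl ab unfolding X'_def by auto
    qed
    moreover have "s \<noteq> q" "q \<in> X" using q unfolding X'_def by auto
    ultimately show ?thesis using s q(2) by blast
  qed
qed


lemma D2:
  assumes symE: "\<And>u v. (u, v) \<in> E \<Longrightarrow> (v, u) \<in> E"
    and fin: "finite X"
    and ch: "\<And>Y. Y \<subseteq> X \<Longrightarrow> Y \<noteq> {} \<Longrightarrow> \<exists>v\<in>Y. smpl E Y v"
    and c: "c \<in> X" and C: "C \<subseteq> X" "C \<noteq> {}"
    and Cc: "\<And>v. v \<in> C \<Longrightarrow> v \<noteq> c \<and> (c, v) \<notin> E"
    and clo: "\<And>u d. u \<in> C \<Longrightarrow> d \<in> X \<Longrightarrow> (u, d) \<in> E \<Longrightarrow> d \<in> C \<or> (c, d) \<in> E"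
  shows "\<exists>v\<in>C. smpl E X v"
  using fin ch c C clo
proof (induction X rule: finite_psubset_induct)
  case (psubset X)
  obtain u where u: "u \<in> C" using psubset.prems(4) by blast
  have "u \<in> X" "u \<noteq> c" "(c, u) \<notin> E" using u psubset.prems(3) Cc by auto
  hence cu: "c \<noteq> u" by simp
  obtain s1 s2 where ss: "s1 \<in> X" "s2 \<in> X" "s1 \<noteq> s2" "smpl E X s1" "smpl E X s2"
    using dirac[OF symE psubset.hyps(1) psubset.prems(1) psubset.prems(2) \<open>u \<in> X\<close> cu \<open>(c, u) \<notin> E\<close>] by blast
  obtain s where s: "s \<in> X" "s \<noteq> c" "smpl E X s"
  proof (cases "s1 = c")
    case True thus ?thesis using that[of s2] ss by blast
  next
    case False thus ?thesis using that[of s1] ss by blast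
  qed
  show ?case
  proof (cases "s \<in> C")
    case True thus ?thesis using s by blast
  next
    case False
    define X' where "X' = X - {s}"
    have sub: "X' \<subset> X" using s unfolding X'_def by auto
    have ch': "\<exists>v\<in>Y. smpl E Y v" if "Y \<subseteq> X'" "Y \<noteq> {}" for Y
      using psubset.prems(1)[of Y] sub that by blast
    have c': "c \<in> X'" using psubset.prems(2) s unfolding X'_def by auto
    have C': "C \<subseteq> X'" using psubset.prems(3) False unfolding X'_def by auto
    have clo': "d \<in> C \<or> (c, d) \<in> E" if "u \<in> C" "d \<in> X'" "(u, d) \<in> E" for u d
      using psubset.prems(5)[of u d] sub that by blast
    have IH': "\<exists>v\<in>C. smpl E X' v"
      apply (rule psubset.IH[OF sub])
      subgoal for Y by (rule ch')
      subgoal by (rule c')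
      subgoal by (rule C')
      subgoal by (rule psubset.prems(4))
      subgoal for u d by (rule clo')
      done
    obtain v where v: "v \<in> C" "smpl E X' v" using IH' by blast
    have vs: "(v, s) \<notin> E"
    proof
      assume vs: "(v, s) \<in> E"
      have "(c, s) \<in> E" using psubset.prems(5)[OF v(1) s(1) vs] False by blast
      hence "(s, c) \<in> E" using symE by blast
      have "v \<noteq> c" using Cc v(1) by blast
      have "v \<in> X" using v(1) psubset.prems(3) by blast
      hence "(v, c) \<in> E" using s(3) vs \<open>(s, c) \<in> E\<close> \<open>v \<noteq> c\<close> psubset.prems(2)
        unfolding smpl_def by blast
      thus False using Cc[OF v(1)] symE by blast
    qed
    have "smpl E X v"
      unfolding smpl_def
    proof (intro ballI impI)
      fix a b assume ab: "a \<in> X" "b \<in> X" "(a, v) \<in> E" "(v, b) \<in> E" "a \<noteq> b"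
      have "a \<noteq> s" using ab(3) vs symE by auto
      moreover have "b \<noteq> s" using ab(4) vs by auto
      ultimately have "a \<in> X'" "b \<in> X'" using ab unfolding X'_def by auto
      thus "(a, b) \<in> E" using v(2) ab(3-5) unfolding smpl_def by blast
    qed
    thus ?thesis using v(1) by blast
  qed
qed

context wctx begin

lemma sym_iff: "(u, v) \<in> sym_arcs A \<longleftrightarrow> sy A u v"
  unfolding sym_arcs_def sy_def by auto

lemma symE: "(u, v) \<in> sym_arcs A \<Longrightarrow> (v, u) \<in> sym_arcs A"
  unfolding sym_arcs_def by auto

lemma chE:
  assumes ch: "chordal V (sym_arcs A)" and Y: "Y \<subseteq> V" "Y \<noteq> {}"
  shows "\<exists>v\<in>Y. smpl (sym_arcs A) Y v"
proof -
  obtain v where v: "v \<in> Y" "di_simplicial (induced_arcs (sym_arcs A) Y) v"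
    using ch Y unfolding chordal_def by blast
  have "smpl (sym_arcs A) Y v"
    unfolding smpl_def
  proof (intro ballI impI)
    fix u w assume uw: "u \<in> Y" "w \<in> Y" "(u, v) \<in> sym_arcs A" "(v, w) \<in> sym_arcs A" "u \<noteq> w"
    have "u \<in> in_nbrs (induced_arcs (sym_arcs A) Y) v" "w \<in> out_nbrs (induced_arcs (sym_arcs A) Y) v"
      using uw v(1) unfolding in_nbrs_def out_nbrs_def induced_arcs_def by auto
    hence "(u, w) \<in> induced_arcs (sym_arcs A) Y" using v(2) uw(5) unfolding di_simplicial_def by blast
    thus "(u, w) \<in> sym_arcs A" unfolding induced_arcs_def by auto
  qed
  thus ?thesis using v(1) by blast
qed

lemma smpl_gs: "smpl (sym_arcs A) V v \<Longrightarrow> gs v"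
  unfolding smpl_def gs_def sym_iff[symmetric]
  by (meson inV1 sym_iff sy_def)

lemma AP:
  assumes ch: "chordal V (sym_arcs A)" and xy: "sy A x y" and xa: "ns A x a" and ay: "ns A a y"
    and g: "gs x \<or> gs y"
  shows "\<exists>v. gs v \<and> ns A x v \<and> ns A v y"
proof -
  define c where "c = (if gs x then y else x)"
  define C where "C = {v \<in> V. ns A x v \<and> ns A v y}"
  have cV: "c \<in> V" using xy unfolding c_def sy_def by (auto intro: inV1)
  have aC: "a \<in> C" using xa ay unfolding C_def ns_def by (auto intro: inV2)
  have CV: "C \<subseteq> V" unfolding C_def by auto
  have Cc: "v \<noteq> c \<and> (c, v) \<notin> sym_arcs A" if "v \<in> C" for v
    using that unfolding C_def c_def ns_def sym_arcs_def by auto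
  have clo: "d \<in> C \<or> (c, d) \<in> sym_arcs A" if u: "u \<in> C" and d: "d \<in> V" and ud: "(u, d) \<in> sym_arcs A" for u d
  proof -
    have xu: "ns A x u" and uy: "ns A u y" using u unfolding C_def by auto
    have sud: "sy A u d" using ud sym_iff by auto
    have L: "(x, d) \<in> A" "(d, y) \<in> A" using LP[OF xu uy xy sud] by auto
    have dx: "d \<noteq> x" and dy: "d \<noteq> y" using xu uy sud unfolding ns_def sy_def by auto
    show ?thesis
    proof (cases "(d, x) \<notin> A \<and> (y, d) \<notin> A")
      case True
      hence "d \<in> C" using L d unfolding C_def ns_def by auto
      thus ?thesis by blast
    next
      case False
      hence alt: "sy A x d \<or> sy A d y" using L unfolding sy_def by auto
      have "sy A c d"
      proof (cases "gs x")
        case True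
        hence cy: "c = y" unfolding c_def by auto
        show ?thesis
        proof (cases "sy A d y")
          case True thus ?thesis using cy unfolding sy_def by auto
        next
          case False
          hence "sy A x d" using alt by blast
          moreover have "sy A y x" using xy unfolding sy_def by auto
          ultimately show ?thesis using \<open>gs x\<close> dy cy unfolding gs_def by metis
        qed
      next
        case False
        hence gy: "gs y" and cx: "c = x" using g unfolding c_def by auto
        show ?thesis
        proof (cases "sy A x d")
          case True thus ?thesis using cx by auto
        next
          case False
          hence "sy A d y" using alt by blast
          moreover have "sy A y x" using xy unfolding sy_def by auto
          ultimately have "sy A d x" using gy dx unfolding gs_def by metis
          thus ?thesis using cx unfolding sy_def by auto
        qed
      qed
      thus ?thesis using sym_iff by blast
    qed
  qed
  have ch': "\<exists>v\<in>Y. smpl (sym_arcs A) Y v" if "Y \<subseteq> V" "Y \<noteq> {}" for Y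
    using chE[OF ch that] .
  have "\<exists>v\<in>C. smpl (sym_arcs A) V v"
    apply (rule D2[where c = c])
    subgoal for u v by (rule symE)
    subgoal by (rule finV)
    subgoal for Y by (rule ch')
    subgoal by (rule cV)
    subgoal by (rule CV)
    subgoal using aC by blast
    subgoal for v by (rule Cc)
    subgoal for u d by (rule clo)
    done
  then obtain v where "v \<in> C" "smpl (sym_arcs A) V v" by blast
  thus ?thesis using smpl_gs unfolding C_def by blast
qed

lemma MIX:
  assumes va: "ns A v a" and ap: "ns A a p" and vp: "sy A v p"
    and qv: "ns A q v" and vw: "ns A v w" and qw: "sy A q w" and g: "gs w"
  shows "(ns A w a \<and> sy A w p) \<or> (ns A q a \<and> ns A a w)"
proof -
  have aw: "a \<noteq> w"
  proof
    assume "a = w"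
    have adj: "(p, q) \<in> A \<or> (q, p) \<in> A" using IS_adj[OF qv vp] by blast
    show False
      by (rule noF4[of v w p q])
         (use \<open>a = w\<close> va ap vp qv vw qw adj nl in \<open>auto simp: ns_def sy_def\<close>)
  qed
  have L: "(q, p) \<in> A" "(p, w) \<in> A" using LP[OF qv vw qw vp] by auto
  have adj: "(a, w) \<in> A \<or> (w, a) \<in> A"
  proof (cases "(w, p) \<in> A")
    case True
    hence "sy A p w" using L unfolding sy_def by auto
    thus ?thesis using IS_adj[OF ap] by blast
  next
    case False
    hence "ns A p w" using L unfolding ns_def by auto
    thus ?thesis using W1[OF ap] by blast
  qed
  consider "sy A a w" | "ns A w a" | "ns A a w" using adj unfolding sy_def ns_def by blast
  then show ?thesis
  proof cases
    case 1
    have "(w, p) \<in> A" using LP[OF va ap vp 1] by blast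
    hence "sy A w p" using L unfolding sy_def by auto
    have "sy A a p"
      using g 1 \<open>sy A w p\<close> unfolding gs_def
      by (metis ap ns_def sy_def)
    thus ?thesis using ap unfolding ns_def sy_def by auto
  next
    case 2
    have "(w, p) \<in> A" using W1[OF 2 ap] .
    hence "sy A w p" using L unfolding sy_def by auto
    thus ?thesis using 2 by blast
  next
    case 3
    have qa: "(q, a) \<in> A" using W1[OF qv va] .
    have "(a, q) \<notin> A"
    proof
      assume "(a, q) \<in> A"
      hence "sy A a q" using qa unfolding sy_def by auto
      hence "(v, q) \<in> A" using LP[OF va ap vp] by blast
      thus False using qv unfolding ns_def by auto
    qed
    hence "ns A q a" using qa unfolding ns_def by auto
    thus ?thesis using 3 by blast
  qed
qed

lemma main:
  assumes ch: "chordal V (sym_arcs A)" and ne: "V \<noteq> {}"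
  shows "\<exists>v\<in>V. di_simplicial A v"
proof -
  obtain v0 where v0: "v0 \<in> V" "smpl (sym_arcs A) V v0" using chE[OF ch _ ne] by blast
  have g0: "gs v0" using smpl_gs v0(2) .
  obtain b1 where b1: "b1 \<in> V \<and> gs b1"
    and b1min: "\<And>y. y \<in> V \<and> gs y \<Longrightarrow> card (out_nbrs A b1) \<le> card (out_nbrs A y)"
    using ex_has_least_nat[of "\<lambda>x. x \<in> V \<and> gs x" v0 "\<lambda>x. card (out_nbrs A x)"] v0(1) g0 by blast
  have "\<not> blS b1"
  proof
    assume "blS b1"
    then obtain a c where bc: "sy A b1 c" and ba: "ns A b1 a" and ac: "ns A a c" unfolding blS_def by blast
    obtain v where v: "gs v" "ns A b1 v" "ns A v c" using AP[OF ch bc ba ac] b1 by blast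
    have "card (out_nbrs A v) < card (out_nbrs A b1)" using OUT[OF v(2) v(3) bc] .
    moreover have "v \<in> V" using v(2) unfolding ns_def by (auto intro: inV2)
    ultimately show False using b1min[of v] v(1) by linarith
  qed
  obtain b where b: "b \<in> V \<and> gs b \<and> \<not> blS b"
    and bmin: "\<And>y. y \<in> V \<and> gs y \<and> \<not> blS y \<Longrightarrow> card (in_nbrs A b) \<le> card (in_nbrs A y)"
    using ex_has_least_nat[of "\<lambda>x. x \<in> V \<and> gs x \<and> \<not> blS x" b1 "\<lambda>x. card (in_nbrs A x)"]
      b1 \<open>\<not> blS b1\<close> by blast
  have "\<not> blT b"
  proof
    assume "blT b"
    then obtain a c where cb: "sy A c b" and ca: "ns A c a" and ab: "ns A a b" unfolding blT_def by blast
    define PW where "PW = (\<lambda>v. v \<in> V \<and> gs v \<and> (\<exists>c'. sy A c' b \<and> ns A c' v \<and> ns A v b))"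
    obtain v0 where "gs v0" "ns A c v0" "ns A v0 b" using AP[OF ch cb ca ab] b by blast
    hence "PW v0" unfolding PW_def using cb by (auto simp: ns_def intro: inV2)
    then obtain v where v: "PW v" and vmin: "\<And>y. PW y \<Longrightarrow> card (out_nbrs A v) \<le> card (out_nbrs A y)"
      using ex_has_least_nat[of PW v0 "\<lambda>x. card (out_nbrs A x)"] by blast
    obtain c' where c': "sy A c' b" "ns A c' v" "ns A v b" and vV: "v \<in> V" and gv: "gs v"
      using v unfolding PW_def by blast
    have "\<not> blS v"
    proof
      assume "blS v"
      then obtain a0 p0 where vp0: "sy A v p0" and va0: "ns A v a0" and a0p0: "ns A a0 p0"
        unfolding blS_def by blast
      obtain a' where a': "gs a'" "ns A v a'" "ns A a' p0" using AP[OF ch vp0 va0 a0p0] gv by blast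
      have lt: "card (out_nbrs A a') < card (out_nbrs A v)" using OUT[OF a'(2) a'(3) vp0] .
      have "(ns A b a' \<and> sy A b p0) \<or> (ns A c' a' \<and> ns A a' b)"
        using MIX[OF a'(2) a'(3) vp0 c'(2) c'(3) c'(1)] b by blast
      then show False
      proof
        assume "ns A b a' \<and> sy A b p0"
        hence "blS b" unfolding blS_def using a'(3) by blast
        thus False using b by blast
      next
        assume "ns A c' a' \<and> ns A a' b"
        hence "PW a'" unfolding PW_def using a'(1) c'(1) by (auto simp: ns_def intro: inV2)
        thus False using vmin[of a'] lt by linarith
      qed
    qed
    have "card (in_nbrs A v) < card (in_nbrs A b)" using IN[OF c'(2) c'(3) c'(1)] .
    thus False using bmin[of v] vV gv \<open>\<not> blS v\<close> by linarith
  qed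
  have "di_simplicial A b" using ds_crit b \<open>\<not> blT b\<close> by blast
  thus ?thesis using b by blast
qed

end


lemma her_digraph: "digraph V A \<Longrightarrow> X \<subseteq> V \<Longrightarrow> digraph X (induced_arcs A X)"
  unfolding digraph_def induced_arcs_def by (auto intro: finite_subset)

lemma her_wqt:
  assumes w: "weakly_quasi_transitive V A" and X: "X \<subseteq> V"
  shows "weakly_quasi_transitive X (induced_arcs A X)"
  unfolding weakly_quasi_transitive_def
proof (intro ballI impI)
  fix v u w
  assume v: "v \<in> X"
    and u: "u \<in> in_nbrs (induced_arcs A X) v \<union> out_nbrs (induced_arcs A X) v"
    and ww: "w \<in> in_nbrs (induced_arcs A X) v \<union> out_nbrs (induced_arcs A X) v"
    and ns: "\<not> synchronous (induced_arcs A X) v u w"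
  have uX: "u \<in> X" and wX: "w \<in> X" using u ww unfolding in_nbrs_def out_nbrs_def induced_arcs_def by auto
  have eqi: "z \<in> in_nbrs (induced_arcs A X) v \<longleftrightarrow> z \<in> in_nbrs A v" if "z \<in> X" for z
    using that v unfolding in_nbrs_def induced_arcs_def by auto
  have eqo: "z \<in> out_nbrs (induced_arcs A X) v \<longleftrightarrow> z \<in> out_nbrs A v" if "z \<in> X" for z
    using that v unfolding out_nbrs_def induced_arcs_def by auto
  have u': "u \<in> in_nbrs A v \<union> out_nbrs A v" using u eqi[OF uX] eqo[OF uX] by auto
  have w': "w \<in> in_nbrs A v \<union> out_nbrs A v" using ww eqi[OF wX] eqo[OF wX] by auto
  have ns': "\<not> synchronous A v u w"
    using ns eqi[OF uX] eqo[OF uX] eqi[OF wX] eqo[OF wX] unfolding synchronous_def by auto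
  have "v \<in> V" using v X by auto
  hence "adjacent A u w" using w u' w' ns' unfolding weakly_quasi_transitive_def by blast
  thus "adjacent (induced_arcs A X) u w" using uX wX unfolding adjacent_def induced_arcs_def by auto
qed

lemma her_contains:
  assumes "contains_induced X (induced_arcs A X) W F" "X \<subseteq> V"
  shows "contains_induced V A W F"
proof -
  obtain f where f: "inj_on f W" "f ` W \<subseteq> X"
    "\<forall>i\<in>W. \<forall>j\<in>W. (f i, f j) \<in> induced_arcs A X \<longleftrightarrow> (i, j) \<in> F"
    using assms(1) unfolding contains_induced_def by blast
  have "\<forall>i\<in>W. \<forall>j\<in>W. (f i, f j) \<in> A \<longleftrightarrow> (i, j) \<in> F"
  proof (intro ballI)
    fix i j assume ij: "i \<in> W" "j \<in> W"
    hence "f i \<in> X" "f j \<in> X" using f(2) by auto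
    thus "(f i, f j) \<in> A \<longleftrightarrow> (i, j) \<in> F" using f(3) ij unfolding induced_arcs_def by auto
  qed
  thus ?thesis unfolding contains_induced_def using f(1,2) assms(2) by blast
qed

lemma her_chordal_sym:
  assumes "chordal V (sym_arcs A)" "X \<subseteq> V"
  shows "chordal X (sym_arcs (induced_arcs A X))"
  unfolding chordal_def
proof (intro allI impI)
  fix Y assume Y: "Y \<subseteq> X" "Y \<noteq> {}"
  have eq: "induced_arcs (sym_arcs (induced_arcs A X)) Y = induced_arcs (sym_arcs A) Y"
    using Y(1) unfolding induced_arcs_def sym_arcs_def by auto
  show "\<exists>v\<in>Y. di_simplicial (induced_arcs (sym_arcs (induced_arcs A X)) Y) v"
    unfolding eq using assms Y unfolding chordal_def by blast
qed

lemma chordal_sym: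
  assumes "chordal V A" shows "chordal V (sym_arcs A)"
  unfolding chordal_def
proof (intro allI impI)
  fix Y assume Y: "Y \<subseteq> V" "Y \<noteq> {}"
  then obtain v where v: "v \<in> Y" "di_simplicial (induced_arcs A Y) v"
    using assms unfolding chordal_def by blast
  have "di_simplicial (induced_arcs (sym_arcs A) Y) v"
    unfolding di_simplicial_def
  proof (intro ballI impI)
    fix u w
    assume u: "u \<in> in_nbrs (induced_arcs (sym_arcs A) Y) v"
      and w: "w \<in> out_nbrs (induced_arcs (sym_arcs A) Y) v" and uw: "u \<noteq> w"
    have uv: "(u, v) \<in> A" "(v, u) \<in> A" "u \<in> Y" and vw: "(v, w) \<in> A" "(w, v) \<in> A" "w \<in> Y"
      using u w unfolding in_nbrs_def out_nbrs_def induced_arcs_def sym_arcs_def by auto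
    have "u \<in> in_nbrs (induced_arcs A Y) v" "w \<in> out_nbrs (induced_arcs A Y) v"
      "w \<in> in_nbrs (induced_arcs A Y) v" "u \<in> out_nbrs (induced_arcs A Y) v"
      using uv vw v(1) unfolding in_nbrs_def out_nbrs_def induced_arcs_def by auto
    hence "(u, w) \<in> induced_arcs A Y" "(w, u) \<in> induced_arcs A Y"
      using v(2) uw unfolding di_simplicial_def by auto
    thus "(u, w) \<in> induced_arcs (sym_arcs A) Y" unfolding induced_arcs_def sym_arcs_def by auto
  qed
  thus "\<exists>v\<in>Y. di_simplicial (induced_arcs (sym_arcs A) Y) v" using v(1) by blast
qed

lemma chordal_noF:
  assumes ch: "chordal V A" and ci: "contains_induced V A W F" and Wne: "W \<noteq> {}"
    and bad: "\<forall>i\<in>W. \<exists>u\<in>W. \<exists>w\<in>W. (u, i) \<in> F \<and> (i, w) \<in> F \<and> u \<noteq> w \<and> (u, w) \<notin> F"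
  shows False
proof -
  obtain f where f: "inj_on f W" "f ` W \<subseteq> V"
    and iff: "\<forall>i\<in>W. \<forall>j\<in>W. (f i, f j) \<in> A \<longleftrightarrow> (i, j) \<in> F"
    using ci unfolding contains_induced_def by blast
  define Y where "Y = f ` W"
  have "Y \<subseteq> V" "Y \<noteq> {}" using f Wne unfolding Y_def by auto
  then obtain v where v: "v \<in> Y" "di_simplicial (induced_arcs A Y) v"
    using ch unfolding chordal_def by blast
  obtain i where i: "i \<in> W" "v = f i" using v(1) unfolding Y_def by blast
  obtain u w where uw: "u \<in> W" "w \<in> W" "(u, i) \<in> F" "(i, w) \<in> F" "u \<noteq> w" "(u, w) \<notin> F"
    using bad i(1) by blast
  have "f u \<in> in_nbrs (induced_arcs A Y) v" "f w \<in> out_nbrs (induced_arcs A Y) v"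
    using uw iff i unfolding in_nbrs_def out_nbrs_def induced_arcs_def Y_def by auto
  moreover have "f u \<noteq> f w" using f(1) uw(1,2,5) unfolding inj_on_def by blast
  ultimately have "(f u, f w) \<in> induced_arcs A Y" using v(2) unfolding di_simplicial_def by blast
  hence "(u, w) \<in> F" using iff uw(1,2) unfolding induced_arcs_def by auto
  thus False using uw(6) by blast
qed

lemma badFa: "\<forall>i\<in>{1,2,3,4::nat}. \<exists>u\<in>{1,2,3,4}. \<exists>w\<in>{1,2,3,4}. (u, i) \<in> F_a \<and> (i, w) \<in> F_a \<and> u \<noteq> w \<and> (u, w) \<notin> F_a"
  by (simp add: F_a_def)
lemma badFb: "\<forall>i\<in>{1,2,3,4::nat}. \<exists>u\<in>{1,2,3,4}. \<exists>w\<in>{1,2,3,4}. (u, i) \<in> F_b \<and> (i, w) \<in> F_b \<and> u \<noteq> w \<and> (u, w) \<notin> F_b"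
  by (simp add: F_b_def)
lemma badFc: "\<forall>i\<in>{1,2,3,4::nat}. \<exists>u\<in>{1,2,3,4}. \<exists>w\<in>{1,2,3,4}. (u, i) \<in> F_c \<and> (i, w) \<in> F_c \<and> u \<noteq> w \<and> (u, w) \<notin> F_c"
  by (simp add: F_c_def)
lemma badFd: "\<forall>i\<in>{1,2,3::nat}. \<exists>u\<in>{1,2,3}. \<exists>w\<in>{1,2,3}. (u, i) \<in> F_d \<and> (i, w) \<in> F_d \<and> u \<noteq> w \<and> (u, w) \<notin> F_d"
  by (simp add: F_d_def)

theorem theorem3p3:
  fixes V :: "'a set" and A :: "('a \<times> 'a) set"
  assumes "digraph V A" and "weakly_quasi_transitive V A"
  shows "chordal V A \<longleftrightarrow>
           (chordal V (sym_arcs A) \<and>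
            \<not> contains_induced V A {1,2,3,4} F_a \<and>
            \<not> contains_induced V A {1,2,3,4} F_b \<and>
            \<not> contains_induced V A {1,2,3,4} F_c \<and>
            \<not> contains_induced V A {1,2,3} F_d)"
proof
  assume ch: "chordal V A"
  show "chordal V (sym_arcs A) \<and>
            \<not> contains_induced V A {1,2,3,4} F_a \<and>
            \<not> contains_induced V A {1,2,3,4} F_b \<and>
            \<not> contains_induced V A {1,2,3,4} F_c \<and>
            \<not> contains_induced V A {1,2,3} F_d"
    using chordal_sym[OF ch] chordal_noF[OF ch _ _ badFa] chordal_noF[OF ch _ _ badFb]
      chordal_noF[OF ch _ _ badFc] chordal_noF[OF ch _ _ badFd] by blast
next
  assume R: "chordal V (sym_arcs A) \<and>
            \<not> contains_induced V A {1,2,3,4} F_a \<and>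
            \<not> contains_induced V A {1,2,3,4} F_b \<and>
            \<not> contains_induced V A {1,2,3,4} F_c \<and>
            \<not> contains_induced V A {1,2,3} F_d"
  show "chordal V A"
    unfolding chordal_def
  proof (intro allI impI)
    fix X assume X: "X \<subseteq> V" "X \<noteq> {}"
    interpret w: wctx X "induced_arcs A X"
      apply unfold_locales
      subgoal by (rule her_digraph[OF assms(1) X(1)])
      subgoal by (rule her_wqt[OF assms(2) X(1)])
      subgoal using R her_contains[OF _ X(1)] by blast
      subgoal using R her_contains[OF _ X(1)] by blast
      subgoal using R her_contains[OF _ X(1)] by blast
      subgoal using R her_contains[OF _ X(1)] by blast
      done
    show "\<exists>v\<in>X. di_simplicial (induced_arcs A X) v"
      using w.main[OF her_chordal_sym[OF _ X(1)] X(2)] R by blast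
  qed
qed

end
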